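(* There exist two-dimensional random vectors $\mathbf{X},\mathbf{Y}$ with $\mathbf{X}\succ_{\mathrm{FSD}}\mathbf{Y}$ and a function $u\in\mathcal{U}$ with $\frac{\partial^2u(x_1,x_2)}{\partial x_1\partial x_2}\le0$ such that $\mathbb{E}\,u(\mathbf{X})\le\mathbb{E}\,u(\mathbf{Y})$; i.e. strict first-order stochastic dominance does not in general imply strictly greater expected utility for all $u\in\mathcal{U}$ with nonpositive mixed partial derivative.
   Context: For $\mathbf{x},\mathbf{y}\in\mathbb{R}^2$: $\mathbf{y}\preceq_p\mathbf{x}$ iff $y_i\le x_i$ for all $i$; $\mathbf{x}\succ_p\mathbf{y}$ iff $x_i\ge y_i$ for all $i$ and $x_i>y_i$ for some $i$. $\mathcal{U}$ is the class of strictly monotonically increasing $u:\mathbb{R}^2\to\mathbb{R}$ ($\mathbf{x}\succ_p\mathbf{y}\implies u(\mathbf{x})>u(\mathbf{y})$). CDF: $F_{\mathbf{X}}(\mathbf{x})=P(\mathbf{X}\preceq_p\mathbf{x})$. $\mathbf{X}\succ_{\mathrm{FSD}}\mathbf{Y}$ iff $F_{\mathbf{X}}(\mathbf{v})\le F_{\mathbf{Y}}(\mathbf{v})$ for all $\mathbf{v}$ and strict inequality for some $\mathbf{v}$. *)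

theory Defs
  imports "HOL-Probability.Probability"
begin

definition pareto_le :: "real \<times> real \<Rightarrow> real \<times> real \<Rightarrow> bool" where
  "pareto_le y x \<longleftrightarrow> fst y \<le> fst x \<and> snd y \<le> snd x"

definition pareto_gt :: "real \<times> real \<Rightarrow> real \<times> real \<Rightarrow> bool" where
  "pareto_gt x y \<longleftrightarrow> (fst x \<ge> fst y \<and> snd x \<ge> snd y) \<and> (fst x > fst y \<or> snd x > snd y)"

definition strictly_increasing2 :: "(real \<times> real \<Rightarrow> real) \<Rightarrow> bool" where
  "strictly_increasing2 u \<longleftrightarrow> (\<forall>x y. pareto_gt x y \<longrightarrow> u x > u y)"

definition cdf2 :: "(real \<times> real) measure \<Rightarrow> real \<times> real \<Rightarrow> real" where
  "cdf2 P v = measure P {x. pareto_le x v}"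

definition fsd :: "(real \<times> real) measure \<Rightarrow> (real \<times> real) measure \<Rightarrow> bool" where
  "fsd PX PY \<longleftrightarrow> (\<forall>v. cdf2 PX v \<le> cdf2 PY v) \<and> (\<exists>v. cdf2 PX v < cdf2 PY v)"

text \<open>h is the mixed second partial derivative d^2 u / (dx1 dx2): first differentiate
  in x2 (giving g), then differentiate g in x1; both partials exist everywhere.\<close>
definition mixed_partial :: "(real \<times> real \<Rightarrow> real) \<Rightarrow> (real \<times> real \<Rightarrow> real) \<Rightarrow> bool" where
  "mixed_partial u h \<longleftrightarrow> (\<exists>g :: real \<Rightarrow> real \<Rightarrow> real.
      (\<forall>x1 x2. ((\<lambda>t. u (x1, t)) has_real_derivative g x1 x2) (at x2)) \<and>
      (\<forall>x1 x2. ((\<lambda>s. g s x2) has_real_derivative h (x1, x2)) (at x1)))"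

end

theory Submission
  imports Defs
begin

lemma card2: "a \<noteq> b \<Longrightarrow> real (card ({a, b} \<inter> A)) = of_bool (a \<in> A) + of_bool (b \<in> A)"
  by (cases "a \<in> A"; cases "b \<in> A"; simp add: Int_insert_left)

lemma pareto_set_borel: "{x. pareto_le x v} \<in> sets borel"
  unfolding pareto_le_def
  by (intro borel_closed closed_Collect_conj closed_Collect_le continuous_intros)

definition D :: "real \<times> real \<Rightarrow> real \<times> real \<Rightarrow> (real \<times> real) measure" where
  "D a b = distr (measure_pmf (pmf_of_set {a, b})) borel id"

lemma D_prob: "prob_space (D a b)"
  unfolding D_def by (rule prob_space.prob_space_distr) (auto simp: measure_pmf.prob_space_axioms)

lemma D_sets: "sets (D a b) = sets borel"
  unfolding D_def by simp

lemma D_cdf: "a \<noteq> b \<Longrightarrow> cdf2 (D a b) v = (of_bool (pareto_le a v) + of_bool (pareto_le b v)) / 2"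
proof -
  assume ab: "a \<noteq> b"
  have "measure (distr (measure_pmf (pmf_of_set {a, b})) borel id) {x. pareto_le x v}
     = measure (measure_pmf (pmf_of_set {a, b})) {x. pareto_le x v}"
    by (subst measure_distr) (auto simp: pareto_set_borel)
  also have "\<dots> = real (card ({a,b} \<inter> {x. pareto_le x v})) / real (card {a,b})"
    by (rule measure_pmf_of_set) auto
  also have "\<dots> = (of_bool (pareto_le a v) + of_bool (pareto_le b v)) / 2"
    using ab by (subst card2) auto
  finally show ?thesis by (simp add: cdf2_def D_def)
qed

lemma D_int: fixes f :: "real \<times> real \<Rightarrow> real" shows "a \<noteq> b \<Longrightarrow> f \<in> borel_measurable borel \<Longrightarrow> integrable (D a b) f \<and> integral\<^sup>L (D a b) f = (f a + f b) / 2"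
  unfolding D_def
  apply (subst integrable_distr_eq, simp, simp)
  apply (subst integral_distr, simp, simp)
  apply (intro conjI)
   apply (rule integrable_measure_pmf_finite, simp)
  apply (subst integral_pmf_of_set, auto)
  done

theorem mainTheorem11:
  shows "\<exists>(PX :: (real \<times> real) measure) (PY :: (real \<times> real) measure) (u :: real \<times> real \<Rightarrow> real).
     prob_space PX \<and> sets PX = sets borel \<and>
     prob_space PY \<and> sets PY = sets borel \<and>
     fsd PX PY \<and>
     strictly_increasing2 u \<and>
     (\<exists>h. mixed_partial u h \<and> (\<forall>x. h x \<le> 0)) \<and>
     integrable PX u \<and> integrable PY u \<and>
     (\<integral>x. u x \<partial>PX) \<le> (\<integral>x. u x \<partial>PY)"
proof -
  let ?X = "D (1,0) (0,1)"
  let ?Y = "D (0,0) (1,1)"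
  let ?u = "\<lambda>x::real\<times>real. fst x + snd x"
  have m: "?u \<in> borel_measurable borel"
    by (intro borel_measurable_continuous_onI continuous_intros)
  have fsd: "fsd ?X ?Y"
    unfolding fsd_def
  proof
    show "\<forall>v. cdf2 ?X v \<le> cdf2 ?Y v"
      by (auto simp: D_cdf pareto_le_def)
    show "\<exists>v. cdf2 ?X v < cdf2 ?Y v"
      by (rule exI[of _ "(0,0)"]) (auto simp: D_cdf pareto_le_def)
  qed
  have si: "strictly_increasing2 ?u"
    unfolding strictly_increasing2_def pareto_gt_def by auto
  have mp: "mixed_partial ?u (\<lambda>_. 0)"
    unfolding mixed_partial_def
    by (rule exI[of _ "\<lambda>_ _. 1"]) (auto intro!: derivative_eq_intros)
  show ?thesis
    apply (rule exI[of _ ?X], rule exI[of _ ?Y], rule exI[of _ ?u])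
    using D_prob D_sets fsd si mp D_int[OF _ m, of "(1,0)" "(0,1)"] D_int[OF _ m, of "(0,0)" "(1,1)"]
    by auto
qed

end
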